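(* Let $N$ be a lattice, $M=\operatorname{Hom}(N,\mathbb{Z})$, $\sigma\subset N_{\mathbb{R}}$ a full-dimensional strongly convex rational polyhedral cone with primitive generators $\vec v_1,\dots,\vec v_r$, and let $a_1,\dots,a_r\ge0$ be rational numbers (the coefficients of an effective torus-invariant $\mathbb{Q}$-divisor $D=\sum a_iD_i$). Let $$P'=\{\vec v\in M_{\mathbb{R}}:\ \vec v\cdot\vec v_i\ge0\ \forall i,\text{ and for every }\vec k\in M\setminus\sigma^\vee\text{ there is }i\text{ with }(\vec v+\vec k)\cdot\vec v_i<-a_i\}.$$ Then $P'=P_\sigma^D:=\{\vec v\in M_{\mathbb{R}}:0\le\vec v\cdot\vec v_i<1-a_i\ \forall i\}$.
   Context: $\sigma^\vee=\{\vec u\in M_{\mathbb{R}}:\vec u\cdot\vec v\ge0\ \forall\vec v\in\sigma\}$. *)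

theory Defs
  imports "HOL-Analysis.Analysis"
begin

text \<open>The lattice N is modelled as the integer points of real^'n; M = Hom(N,Z) is identified
  with the integer points of real^'n via the standard dot product.\<close>

definition lattice_pt :: "real^'n \<Rightarrow> bool" where
  "lattice_pt x \<longleftrightarrow> (\<forall>j. x $ j \<in> \<int>)"

definition primitive_vec :: "real^'n \<Rightarrow> bool" where
  "primitive_vec v \<longleftrightarrow> lattice_pt v \<and>
     (\<forall>w (k::nat). lattice_pt w \<and> v = real k *\<^sub>R w \<longrightarrow> k = 1)"

definition gen_cone :: "nat \<Rightarrow> (nat \<Rightarrow> real^'n) \<Rightarrow> (real^'n) set" where
  "gen_cone r v = {x. \<exists>c. (\<forall>i<r. c i \<ge> 0) \<and> x = (\<Sum>i<r. c i *\<^sub>R v i)}"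

definition dual_cone :: "(real^'n) set \<Rightarrow> (real^'n) set" where
  "dual_cone \<sigma> = {u. \<forall>v\<in>\<sigma>. u \<bullet> v \<ge> 0}"

definition primitive_ray_generators :: "nat \<Rightarrow> (nat \<Rightarrow> real^'n) \<Rightarrow> bool" where
  "primitive_ray_generators r v \<longleftrightarrow>
     (\<forall>i<r. primitive_vec (v i)) \<and>
     inj_on v {..<r} \<and>
     (\<forall>i<r. v i \<notin> {x. \<exists>c. (\<forall>j<r. c j \<ge> 0) \<and> x = (\<Sum>j\<in>{..<r} - {i}. c j *\<^sub>R v j)}) \<and>
     gen_cone r v \<inter> uminus ` gen_cone r v = {0} \<and>
     interior (gen_cone r v) \<noteq> {}"

definition P_prime :: "nat \<Rightarrow> (nat \<Rightarrow> real^'n) \<Rightarrow> (nat \<Rightarrow> real) \<Rightarrow> (real^'n) set" where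
  "P_prime r v a = {x. (\<forall>i<r. x \<bullet> v i \<ge> 0) \<and>
     (\<forall>k. lattice_pt k \<and> k \<notin> dual_cone (gen_cone r v) \<longrightarrow>
          (\<exists>i<r. (x + k) \<bullet> v i < - a i))}"

definition P_sigma_D :: "nat \<Rightarrow> (nat \<Rightarrow> real^'n) \<Rightarrow> (nat \<Rightarrow> real) \<Rightarrow> (real^'n) set" where
  "P_sigma_D r v a = {x. \<forall>i<r. 0 \<le> x \<bullet> v i \<and> x \<bullet> v i < 1 - a i}"

end

theory Submission
  imports Defs
begin


lemma lattice_inner: "lattice_pt x \<Longrightarrow> lattice_pt y \<Longrightarrow> x \<bullet> y \<in> \<int>"
  unfolding lattice_pt_def inner_vec_def by (auto intro!: Ints_sum Ints_mult)

lemma gen_cone_0: "0 \<in> gen_cone r v"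
  unfolding gen_cone_def by (rule CollectI, rule exI[of _ "\<lambda>_. 0"]) simp

lemma gen_cone_add: "x \<in> gen_cone r v \<Longrightarrow> y \<in> gen_cone r v \<Longrightarrow> x + y \<in> gen_cone r v"
  unfolding gen_cone_def
  apply clarify
  subgoal for c c' by (rule exI[of _ "\<lambda>i. c i + c' i"]) (auto simp: scaleR_add_left sum.distrib)
  done

lemma gen_cone_scale: "x \<in> gen_cone r v \<Longrightarrow> t \<ge> 0 \<Longrightarrow> t *\<^sub>R x \<in> gen_cone r v"
  unfolding gen_cone_def
  apply clarify
  subgoal for c by (rule exI[of _ "\<lambda>i. t * c i"]) (auto simp: scaleR_sum_right)
  done

lemma gen_cone_gen: "i < r \<Longrightarrow> v i \<in> gen_cone r v"
  unfolding gen_cone_def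
proof (rule CollectI, rule exI[of _ "\<lambda>l. if l = i then 1 else 0"])
  assume "i < r"
  have "(\<Sum>l<r. (if l = i then 1 else 0) *\<^sub>R v l) = (\<Sum>l<r. if l = i then v l else 0)"
    by (rule sum.cong) auto
  then show "(\<forall>l<r. 0 \<le> (if l = i then 1 else 0::real)) \<and> v i = (\<Sum>l<r. (if l = i then 1 else 0) *\<^sub>R v l)"
    using \<open>i < r\<close> by simp
qed

lemma gen_cone_sub: "\<forall>l<r. c l \<ge> 0 \<Longrightarrow> (\<Sum>l\<in>{..<r} - {j}. c l *\<^sub>R v l) \<in> gen_cone r v"
  unfolding gen_cone_def
  apply (rule CollectI, rule exI[of _ "\<lambda>l. if l = j then 0 else c l"])
  apply (auto simp: if_distrib)
  apply (rule sum.mono_neutral_cong_left) apply auto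
  done

lemma not_dual: assumes "k \<notin> dual_cone (gen_cone r v)" shows "\<exists>i<r. k \<bullet> v i < 0"
proof (rule ccontr)
  assume "\<not> ?thesis"
  hence h: "\<forall>i<r. k \<bullet> v i \<ge> 0" by auto
  have "k \<in> dual_cone (gen_cone r v)"
    unfolding dual_cone_def gen_cone_def
  proof (clarify)
    fix c :: "nat \<Rightarrow> real" assume c: "\<forall>i<r. 0 \<le> c i"
    show "0 \<le> k \<bullet> (\<Sum>i<r. c i *\<^sub>R v i)"
      unfolding inner_sum_right using c h by (auto intro!: sum_nonneg simp: inner_scaleR_right)
  qed
  thus False using assms by blast
qed

lemma easy: assumes "\<forall>i<r. lattice_pt (v i)"
  shows "P_sigma_D r v a \<subseteq> P_prime r v a"
proof
  fix x assume x: "x \<in> P_sigma_D r v a"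
  show "x \<in> P_prime r v a"
    unfolding P_prime_def
  proof (rule CollectI, rule conjI)
    show "\<forall>i<r. 0 \<le> x \<bullet> v i" using x unfolding P_sigma_D_def by auto
    show "\<forall>k. lattice_pt k \<and> k \<notin> dual_cone (gen_cone r v) \<longrightarrow> (\<exists>i<r. (x + k) \<bullet> v i < - a i)"
    proof (intro allI impI)
    fix k assume k: "lattice_pt k \<and> k \<notin> dual_cone (gen_cone r v)"
    then obtain i where i: "i<r" "k \<bullet> v i < 0" using not_dual by blast
    have "k \<bullet> v i \<in> \<int>" using lattice_inner k assms i by blast
    then obtain m where m: "k \<bullet> v i = of_int m" by (auto elim: Ints_cases)
    then have "m < 0" using i(2) by simp
    then have "k \<bullet> v i \<le> -1" using m by simp
    moreover have "x \<bullet> v i < 1 - a i" using x i unfolding P_sigma_D_def by auto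
    ultimately show "\<exists>i<r. (x + k) \<bullet> v i < - a i" using i by (auto simp: inner_add_left intro!: exI[of _ i])
  qed
  qed
qed


lemma primitive_nonzero: "primitive_vec v \<Longrightarrow> v \<noteq> 0"
  unfolding primitive_vec_def
  by (metis of_nat_0 scaleR_zero_left zero_neq_one)

lemma lattice_add: "lattice_pt x \<Longrightarrow> lattice_pt y \<Longrightarrow> lattice_pt (x + y)"
  unfolding lattice_pt_def by auto
lemma lattice_int_scale: "lattice_pt x \<Longrightarrow> lattice_pt (of_int m *\<^sub>R x)"
  unfolding lattice_pt_def by auto
lemma lattice_axis: "lattice_pt (axis l (1::real))"
  unfolding lattice_pt_def axis_def by auto

lemma primitive_dot_one:
  assumes p: "primitive_vec v"
  shows "\<exists>k. lattice_pt k \<and> k \<bullet> v = 1"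
proof -
  define I where "I = {m::int. \<exists>k. lattice_pt k \<and> k \<bullet> v = of_int m}"
  have vlat: "lattice_pt v" using p unfolding primitive_vec_def by auto
  have Iadd: "m \<in> I \<Longrightarrow> n \<in> I \<Longrightarrow> m + n \<in> I" for m n
    unfolding I_def by (auto simp: inner_add_left intro: lattice_add)
  have Iscale: "m \<in> I \<Longrightarrow> c * m \<in> I" for m c
  proof -
    assume "m \<in> I" then obtain k where "lattice_pt k" "k \<bullet> v = of_int m" unfolding I_def by auto
    then show ?thesis unfolding I_def
      by (auto intro!: exI[of _ "of_int c *\<^sub>R k"] lattice_int_scale)
  qed
  have coord: "\<exists>m. m \<in> I \<and> v $ l = of_int m" for l
  proof -
    obtain m where m: "v $ l = of_int m" using vlat unfolding lattice_pt_def by (auto elim: Ints_cases)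
    have "axis l 1 \<bullet> v = of_int m" using m by (simp add: inner_axis')
    then show ?thesis using m lattice_axis unfolding I_def by blast
  qed
  obtain l where l: "v $ l \<noteq> 0" using primitive_nonzero[OF p] by (metis vec_eq_iff zero_index)
  obtain m0 where m0: "m0 \<in> I" "v $ l = of_int m0" using coord by blast
  have "\<bar>m0\<bar> \<in> I" using Iscale[OF m0(1), of "sgn m0"] by (simp add: abs_sgn mult.commute)
  moreover have "\<bar>m0\<bar> > 0" using l m0 by auto
  ultimately have ex: "\<exists>d. d \<in> I \<and> d > 0" by blast
  define d where "d = (LEAST n::nat. n > 0 \<and> int n \<in> I)"
  have exn: "\<exists>n::nat. n > 0 \<and> int n \<in> I" using ex by (metis zero_less_imp_eq_int)
  have d: "d > 0 \<and> int d \<in> I" unfolding d_def by (rule LeastI_ex[OF exn])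
  have dmin: "n > 0 \<Longrightarrow> int n \<in> I \<Longrightarrow> d \<le> n" for n unfolding d_def by (simp add: Least_le)
  have dvd: "int d dvd m" if "m \<in> I" for m
  proof -
    have "m + (- (m div int d)) * int d \<in> I" using Iadd[OF that Iscale[of "int d" "- (m div int d)"]] d by auto
    moreover have "m + (- (m div int d)) * int d = m mod int d" by (simp add: minus_div_mult_eq_mod[symmetric])
    ultimately have mi: "m mod int d \<in> I" by simp
    have "0 \<le> m mod int d" "m mod int d < int d" using d by auto
    show ?thesis
    proof (rule ccontr)
      assume "\<not> ?thesis"
      then have "m mod int d > 0" using \<open>0 \<le> m mod int d\<close> by (auto simp: dvd_eq_mod_eq_0)
      then have "d \<le> nat (m mod int d)" using dmin[of "nat (m mod int d)"] mi by auto
      then show False using \<open>m mod int d < int d\<close> \<open>0 \<le> m mod int d\<close> by (simp add: le_nat_iff)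
    qed
  qed
  define w where "w = (\<chi> l. v $ l / real d)"
  have wl: "lattice_pt w"
    unfolding lattice_pt_def w_def
  proof
    fix l
    obtain m where m: "m \<in> I" "v $ l = of_int m" using coord by blast
    obtain q where q: "m = int d * q" using dvd[OF m(1)] by (auto elim: dvdE)
    show "(\<chi> l. v $ l / real d) $ l \<in> \<int>" using m q d by simp
  qed
  have "v = real d *\<^sub>R w" unfolding w_def using d by (simp add: vec_eq_iff)
  then have "d = 1" using p wl unfolding primitive_vec_def by blast
  then show ?thesis using d unfolding I_def by auto
qed


lemma sc_zero:
  assumes sc: "gen_cone r v \<inter> uminus ` gen_cone r v = {0}"
    and "y \<in> gen_cone r v" "- y \<in> gen_cone r v"
  shows "y = 0"
proof -
  have "y \<in> uminus ` gen_cone r v" using assms(3) by (metis image_eqI minus_minus)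
  then show ?thesis using assms(2) sc by blast
qed

lemma sep:
  assumes prg: "primitive_ray_generators r v" and j: "j < r" and i: "i < r" "i \<noteq> j"
  shows "\<exists>a. a \<bullet> v j = 0 \<and> (\<forall>l<r. a \<bullet> v l \<ge> 0) \<and> a \<bullet> v i > 0"
proof -
  have nz: "v i \<noteq> 0" using prg i unfolding primitive_ray_generators_def primitive_vec_def
    by (metis of_nat_0 scaleR_zero_left zero_neq_one)
  have notin: "\<And>c. \<forall>l<r. c l \<ge> 0 \<Longrightarrow> v j \<noteq> (\<Sum>l\<in>{..<r} - {j}. c l *\<^sub>R v l)"
    using prg j unfolding primitive_ray_generators_def by blast
  have sc: "gen_cone r v \<inter> uminus ` gen_cone r v = {0}"
    using prg unfolding primitive_ray_generators_def by blast
  have vi: "v i \<in> gen_cone r v" using gen_cone_gen i by blast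
  have vj: "v j \<in> gen_cone r v" using gen_cone_gen j by blast
  define T where "T = {x. \<exists>t. x - t *\<^sub>R v j \<in> gen_cone r v}"
  have cT: "convex_cone T"
    unfolding convex_cone_iff
  proof (intro conjI ballI allI impI)
    show "0 \<in> T" unfolding T_def using gen_cone_0 by (auto intro!: exI[of _ 0])
    fix x y assume "x \<in> T" "y \<in> T"
    then obtain t t' where "x - t *\<^sub>R v j \<in> gen_cone r v" "y - t' *\<^sub>R v j \<in> gen_cone r v"
      unfolding T_def by auto
    then have "(x - t *\<^sub>R v j) + (y - t' *\<^sub>R v j) \<in> gen_cone r v" by (rule gen_cone_add)
    then have "(x + y) - (t + t') *\<^sub>R v j \<in> gen_cone r v" by (simp add: algebra_simps)
    then show "x + y \<in> T" unfolding T_def by blast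
  next
    fix x and c :: real assume "x \<in> T" "c \<ge> 0"
    then obtain t where "x - t *\<^sub>R v j \<in> gen_cone r v" unfolding T_def by auto
    then have "c *\<^sub>R (x - t *\<^sub>R v j) \<in> gen_cone r v" using \<open>c \<ge> 0\<close> by (rule gen_cone_scale)
    then have "c *\<^sub>R x - (c * t) *\<^sub>R v j \<in> gen_cone r v" by (simp add: algebra_simps)
    then show "c *\<^sub>R x \<in> T" unfolding T_def by blast
  qed
  define S where "S = insert (- v j) (v ` {..<r})"
  have ST: "S \<subseteq> T"
  proof
    fix x assume "x \<in> S"
    then have "x = - v j \<or> x \<in> v ` {..<r}" unfolding S_def by blast
    then show "x \<in> T"
    proof (elim disjE)
      assume "x = - v j"
      then have "x - (-1) *\<^sub>R v j = 0" by simp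
      then have "x - (-1) *\<^sub>R v j \<in> gen_cone r v" using gen_cone_0 by simp
      then show ?thesis unfolding T_def mem_Collect_eq by (rule exI[where x="-1"])
    next
      assume "x \<in> v ` {..<r}"
      then obtain l where "l < r" "x = v l" by blast
      then have "x - 0 *\<^sub>R v j \<in> gen_cone r v" using gen_cone_gen by simp
      then show ?thesis unfolding T_def mem_Collect_eq by (rule exI[where x="0"])
    qed
  qed
  define H where "H = convex_cone hull S"
  have HT: "H \<subseteq> T" unfolding H_def by (rule hull_minimal[where S=convex_cone, OF ST cT])
  have notT: "- v i \<notin> T"
  proof
    assume "- v i \<in> T"
    then obtain t where g: "- v i - t *\<^sub>R v j \<in> gen_cone r v" unfolding T_def by auto
    show False
    proof (cases "t \<ge> 0")
      case True
      have "(- v i - t *\<^sub>R v j) + t *\<^sub>R v j \<in> gen_cone r v"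
        by (rule gen_cone_add[OF g gen_cone_scale[OF vj True]])
      then have "- v i \<in> gen_cone r v" by simp
      then show False using sc_zero[OF sc vi] nz by blast
    next
      case False
      obtain c where c: "\<forall>l<r. c l \<ge> 0" "- v i - t *\<^sub>R v j = (\<Sum>l<r. c l *\<^sub>R v l)"
        using g unfolding gen_cone_def by auto
      define G where "G = (\<Sum>l\<in>{..<r} - {j}. c l *\<^sub>R v l)"
      have "(\<Sum>l<r. c l *\<^sub>R v l) = c j *\<^sub>R v j + G"
        unfolding G_def using j by (simp add: sum.remove[of "{..<r}" j])
      then have h: "- v i - t *\<^sub>R v j = c j *\<^sub>R v j + G" using c(2) by simp
      have "(- t - c j) *\<^sub>R v j - (v i + G) = (- v i - t *\<^sub>R v j) - (c j *\<^sub>R v j + G)"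
        by (simp add: algebra_simps)
      also have "\<dots> = 0" using h by simp
      finally have eq: "(- t - c j) *\<^sub>R v j = v i + G" by simp
      define d where "d = - t - c j"
      show False
      proof (cases "d > 0")
        case True
        define c' where "c' = (\<lambda>l. (c l + (if l = i then 1 else 0)) / d)"
        have c'nn: "\<forall>l<r. c' l \<ge> 0" unfolding c'_def using c(1) True by auto
        have "(\<Sum>l\<in>{..<r} - {j}. c' l *\<^sub>R v l)
              = (1/d) *\<^sub>R (\<Sum>l\<in>{..<r} - {j}. c l *\<^sub>R v l + (if l = i then v l else 0))"
          unfolding c'_def scaleR_sum_right
          by (rule sum.cong) (auto simp: add_divide_distrib scaleR_add_left scaleR_add_right)
        also have "\<dots> = (1/d) *\<^sub>R (G + v i)"
          unfolding sum.distrib G_def using i by simp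
        also have "\<dots> = (1/d) *\<^sub>R (d *\<^sub>R v j)" using eq unfolding d_def by (simp add: add.commute)
        also have "\<dots> = v j" using True by simp
        finally show False using notin[OF c'nn] by simp
      next
        case False
        have yg: "v i + G \<in> gen_cone r v"
          unfolding G_def by (rule gen_cone_add[OF vi gen_cone_sub[OF c(1)]])
        have "(- d) *\<^sub>R v j \<in> gen_cone r v" using False by (intro gen_cone_scale[OF vj]) auto
        moreover have "(- d) *\<^sub>R v j = - (v i + G)" using eq unfolding d_def by (metis scaleR_minus_left)
        ultimately have "- (v i + G) \<in> gen_cone r v" by simp
        then have y0: "v i + G = 0" using sc_zero[OF sc yg] by blast
        have "G \<in> gen_cone r v" unfolding G_def by (rule gen_cone_sub[OF c(1)])
        then have "- v i \<in> gen_cone r v" using y0 by (metis add.commute add_eq_0_iff)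
        then show False using sc_zero[OF sc vi] nz by blast
      qed
    qed
  qed
  have notH: "- v i \<notin> H" using notT HT by blast
  have clH: "closed H" unfolding H_def S_def by (rule closed_convex_cone_hull) simp
  have cvH: "convex H" unfolding H_def by (rule convex_convex_cone_hull)
  from separating_hyperplane_closed_point[OF cvH clH notH]
  obtain a b where ab: "a \<bullet> (- v i) < b" "\<forall>x\<in>H. a \<bullet> x > b"
    by blast
  have "0 \<in> H" unfolding H_def by (rule convex_cone_hull_contains_0)
  then have "a \<bullet> 0 > b" using ab(2) by blast
  then have b: "b < 0" by simp
  have nn: "a \<bullet> x \<ge> 0" if x: "x \<in> H" for x
  proof (rule ccontr)
    assume "\<not> ?thesis"
    then have ax: "a \<bullet> x < 0" by simp
    define lam where "lam = b / (a \<bullet> x)"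
    have "lam \<ge> 0" unfolding lam_def using ax b by (simp add: divide_nonpos_neg)
    then have "lam *\<^sub>R x \<in> H" using x unfolding H_def by (rule convex_cone_hull_mul[rotated])
    moreover have "a \<bullet> (lam *\<^sub>R x) = b" unfolding lam_def using ax by simp
    moreover have "a \<bullet> (lam *\<^sub>R x) > b" if "lam *\<^sub>R x \<in> H" using ab(2) that by blast
    ultimately show False by simp
  qed
  have SH: "S \<subseteq> H" unfolding H_def by (rule hull_subset)
  have "\<forall>l<r. a \<bullet> v l \<ge> 0"
  proof (intro allI impI)
    fix l assume "l < r" then have "v l \<in> S" unfolding S_def by blast
    then show "a \<bullet> v l \<ge> 0" using nn SH by blast
  qed
  moreover have "- v j \<in> S" unfolding S_def by blast
  then have "a \<bullet> (- v j) \<ge> 0" using nn SH by blast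
  ultimately have "a \<bullet> v j = 0" using j
    by (smt (verit) inner_minus_right)
  moreover have "a \<bullet> v i > 0" using ab(1) b by simp
  ultimately show ?thesis using \<open>\<forall>l<r. a \<bullet> v l \<ge> 0\<close> by blast
qed


lemma real_u:
  assumes prg: "primitive_ray_generators r v" and j: "j < r"
  shows "\<exists>u. u \<bullet> v j = 0 \<and> (\<forall>i<r. i \<noteq> j \<longrightarrow> u \<bullet> v i > 0)"
proof -
  define J where "J = {i. i < r \<and> i \<noteq> j}"
  have fJ: "finite J" unfolding J_def by simp
  have "\<forall>i\<in>J. \<exists>a. a \<bullet> v j = 0 \<and> (\<forall>l<r. a \<bullet> v l \<ge> 0) \<and> a \<bullet> v i > 0"
    unfolding J_def using sep[OF prg j] by blast
  then obtain A where A: "\<forall>i\<in>J. A i \<bullet> v j = 0 \<and> (\<forall>l<r. A i \<bullet> v l \<ge> 0) \<and> A i \<bullet> v i > 0"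
    by metis
  define u where "u = (\<Sum>i\<in>J. A i)"
  have "u \<bullet> v j = 0" unfolding u_def inner_sum_left using A by simp
  moreover have "u \<bullet> v i > 0" if i: "i < r" "i \<noteq> j" for i
  proof -
    have iJ: "i \<in> J" unfolding J_def using i by simp
    have "A i \<bullet> v i \<le> (\<Sum>i'\<in>J. A i' \<bullet> v i)"
      by (rule member_le_sum[OF iJ _ fJ]) (use A i in auto)
    then show ?thesis unfolding u_def inner_sum_left using A iJ by force
  qed
  ultimately show ?thesis by blast
qed

lemma rat_approx:
  fixes u :: "real^'n"
  assumes "open Op" "u \<in> Op"
  shows "\<exists>q. (\<forall>l. q $ l \<in> \<rat>) \<and> q \<in> Op"
proof -
  obtain e where e: "e > 0" "ball u e \<subseteq> Op" using assms open_contains_ball by blast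
  define e' where "e' = e / real CARD('n)"
  have e': "e' > 0" unfolding e'_def using e by simp
  have "\<forall>l. \<exists>x\<in>\<rat>. \<bar>x - u $ l\<bar> < e'"
    using rational_approximation[OF e'] by metis
  then obtain f where f: "\<And>l. f l \<in> \<rat>" "\<And>l. \<bar>f l - u $ l\<bar> < e'" by metis
  define q where "q = (\<chi> l. f l)"
  have "dist u q \<le> (\<Sum>l\<in>UNIV. \<bar>(u - q) $ l\<bar>)" unfolding dist_norm by (rule norm_le_l1_cart)
  also have "\<dots> < (\<Sum>l\<in>(UNIV::'n set). e')"
    by (rule sum_strict_mono) (use f in \<open>auto simp: q_def abs_minus_commute\<close>)
  also have "\<dots> = e" unfolding e'_def by simp
  finally have "q \<in> ball u e" by simp
  then have "q \<in> Op" using e by blast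
  moreover have "\<forall>l. q $ l \<in> \<rat>" unfolding q_def using f by simp
  ultimately show ?thesis by blast
qed

lemma denom:
  fixes p :: "real^'n"
  assumes "\<forall>l. p $ l \<in> \<rat>"
  shows "\<exists>m::nat. m > 0 \<and> lattice_pt (real m *\<^sub>R p)"
proof -
  have "\<forall>l. \<exists>d::nat. d > 0 \<and> real d * p $ l \<in> \<int>"
  proof
    fix l
    obtain a b where ab: "b > 0" "p $ l = of_int a / of_int b"
      using assms by (metis Rats_cases')
    then have "real (nat b) * p $ l = of_int a" by simp
    then show "\<exists>d::nat. d > 0 \<and> real d * p $ l \<in> \<int>" using ab(1)
      by (intro exI[of _ "nat b"]) auto
  qed
  then obtain D where D: "\<And>l. D l > (0::nat)" "\<And>l. real (D l) * p $ l \<in> \<int>" by metis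
  define m where "m = (\<Prod>l\<in>UNIV. D l)"
  have "m > 0" unfolding m_def using D(1) by (simp add: prod_pos)
  moreover have "lattice_pt (real m *\<^sub>R p)"
    unfolding lattice_pt_def
  proof
    fix l
    have "m = D l * (\<Prod>l'\<in>UNIV - {l}. D l')" unfolding m_def by (simp add: prod.remove)
    then have e: "(real m *\<^sub>R p) $ l = real (\<Prod>l'\<in>UNIV - {l}. D l') * (real (D l) * p $ l)"
      by (simp add: mult.assoc mult.commute)
    have h: "real (\<Prod>l'\<in>UNIV - {l}. D l') \<in> \<int>" by (rule Ints_of_nat)
    show "(real m *\<^sub>R p) $ l \<in> \<int>" unfolding e by (rule Ints_mult[OF h D(2)])
  qed
  ultimately show ?thesis by blast
qed



lemma int_u:
  assumes prg: "primitive_ray_generators r v" and j: "j < r"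
  shows "\<exists>U. lattice_pt U \<and> U \<bullet> v j = 0 \<and> (\<forall>i<r. i \<noteq> j \<longrightarrow> U \<bullet> v i \<ge> 1)"
proof -
  have latt: "\<forall>i<r. lattice_pt (v i)" using prg unfolding primitive_ray_generators_def primitive_vec_def by blast
  have "primitive_vec (v j)" using prg j unfolding primitive_ray_generators_def by blast
  then have nzj: "v j \<noteq> 0" by (rule primitive_nonzero)
  obtain u where u: "u \<bullet> v j = 0" "\<forall>i<r. i \<noteq> j \<longrightarrow> u \<bullet> v i > 0" using real_u[OF prg j] by blast
  define J where "J = {i. i < r \<and> i \<noteq> j}"
  define w where "w = (\<lambda>i. (v j \<bullet> v j) *\<^sub>R v i - (v j \<bullet> v i) *\<^sub>R v j)"
  define Op where "Op = (\<Inter>i\<in>J. {q. w i \<bullet> q > 0})"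
  have "open Op" unfolding Op_def J_def by (intro open_INT) (auto intro: open_halfspace_gt)
  moreover have "u \<in> Op"
  proof -
    have "w i \<bullet> u > 0" if "i \<in> J" for i
    proof -
      have "w i \<bullet> u = (v j \<bullet> v j) * (u \<bullet> v i)" unfolding w_def using u(1)
        by (simp add: inner_diff_left inner_diff_right inner_commute)
      moreover have "v j \<bullet> v j > 0" using nzj by simp
      ultimately show ?thesis using u(2) that unfolding J_def by simp
    qed
    then show ?thesis unfolding Op_def by blast
  qed
  ultimately obtain q where q: "\<forall>l. q $ l \<in> \<rat>" "q \<in> Op" using rat_approx by blast
  define p where "p = (v j \<bullet> v j) *\<^sub>R q - (q \<bullet> v j) *\<^sub>R v j"
  have vjZ: "v j \<bullet> v j \<in> \<int>" using lattice_inner latt j by blast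
  have qvjQ: "q \<bullet> v j \<in> \<rat>"
  proof -
    have "\<forall>l. v j $ l \<in> \<int>" using latt j unfolding lattice_pt_def by blast
    then show ?thesis unfolding inner_vec_def using q(1)
      by (auto intro!: Rats_sum Rats_mult simp: Ints_subset_Rats[THEN subsetD])
  qed
  have pQ: "\<forall>l. p $ l \<in> \<rat>"
  proof
    fix l
    have "v j $ l \<in> \<int>" using latt j unfolding lattice_pt_def by blast
    then show "p $ l \<in> \<rat>" unfolding p_def using q(1) vjZ qvjQ
      by (auto intro!: Rats_diff Rats_mult simp: Ints_subset_Rats[THEN subsetD])
  qed
  obtain m :: nat where m: "m > 0" "lattice_pt (real m *\<^sub>R p)" using denom[OF pQ] by blast
  define U where "U = real m *\<^sub>R p"
  have pj: "p \<bullet> v j = 0" unfolding p_def by (simp add: inner_diff_left inner_diff_right inner_commute)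
  have "U \<bullet> v j = 0" unfolding U_def using pj by simp
  moreover have "U \<bullet> v i \<ge> 1" if i: "i < r" "i \<noteq> j" for i
  proof -
    have "p \<bullet> v i = w i \<bullet> q" unfolding p_def w_def
      by (simp add: inner_diff_left inner_diff_right inner_commute mult.commute)
    moreover have "w i \<bullet> q > 0" using q(2) i unfolding Op_def J_def by blast
    ultimately have "U \<bullet> v i > 0" unfolding U_def using m(1) by simp
    moreover have "U \<bullet> v i \<in> \<int>" using lattice_inner m(2) latt i unfolding U_def by blast
    then obtain z where z: "U \<bullet> v i = of_int z" by (auto elim: Ints_cases)
    ultimately have "z > 0" by simp
    then show ?thesis using z by simp
  qed
  ultimately show ?thesis using m(2) unfolding U_def by blast
qed

lemma key:
  assumes prg: "primitive_ray_generators r v" and j: "j < r"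
  shows "\<exists>k. lattice_pt k \<and> k \<bullet> v j = -1 \<and> (\<forall>i<r. i \<noteq> j \<longrightarrow> k \<bullet> v i \<ge> 0)"
proof -
  have pj: "primitive_vec (v j)" using prg j unfolding primitive_ray_generators_def by blast
  obtain k0 where k0: "lattice_pt k0" "k0 \<bullet> v j = 1" using primitive_dot_one[OF pj] by blast
  obtain U where U: "lattice_pt U" "U \<bullet> v j = 0" "\<forall>i<r. i \<noteq> j \<longrightarrow> U \<bullet> v i \<ge> 1"
    using int_u[OF prg j] by blast
  define m where "m = \<lceil>\<Sum>i<r. \<bar>k0 \<bullet> v i\<bar>\<rceil>"
  define k where "k = of_int m *\<^sub>R U + of_int (-1) *\<^sub>R k0"
  have "lattice_pt k" unfolding k_def by (intro lattice_add lattice_int_scale U(1) k0(1))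
  moreover have "k \<bullet> v j = -1" unfolding k_def using U(2) k0(2) by (simp add: inner_add_left inner_diff_left)
  moreover have "k \<bullet> v i \<ge> 0" if i: "i < r" "i \<noteq> j" for i
  proof -
    have "\<bar>k0 \<bullet> v i\<bar> \<le> (\<Sum>i<r. \<bar>k0 \<bullet> v i\<bar>)"
      by (rule member_le_sum) (use i in auto)
    also have "\<dots> \<le> of_int m" unfolding m_def by (rule le_of_int_ceiling)
    finally have a: "\<bar>k0 \<bullet> v i\<bar> \<le> of_int m" .
    have m0: "of_int m \<ge> (0::real)" using a by linarith
    have "of_int m * 1 \<le> of_int m * (U \<bullet> v i)" using U(3) i m0 by (intro mult_left_mono) auto
    then have "k \<bullet> v i \<ge> of_int m - k0 \<bullet> v i" unfolding k_def by (simp add: inner_add_left inner_diff_left)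
    then show ?thesis using a by linarith
  qed
  ultimately show ?thesis by blast
qed

theorem lemma4p20:
  fixes r :: nat and v :: "nat \<Rightarrow> real^'n" and a :: "nat \<Rightarrow> real"
  assumes "primitive_ray_generators r v"
    and "\<forall>i<r. a i \<in> \<rat> \<and> a i \<ge> 0"
  shows "P_prime r v a = P_sigma_D r v a"
proof
  have latt: "\<forall>i<r. lattice_pt (v i)" using assms(1) unfolding primitive_ray_generators_def primitive_vec_def by blast
  show "P_sigma_D r v a \<subseteq> P_prime r v a" by (rule easy[OF latt])
  show "P_prime r v a \<subseteq> P_sigma_D r v a"
  proof
    fix x assume x: "x \<in> P_prime r v a"
    have x0: "\<forall>i<r. x \<bullet> v i \<ge> 0" using x unfolding P_prime_def by blast
    have xk: "\<And>k. lattice_pt k \<Longrightarrow> k \<notin> dual_cone (gen_cone r v) \<Longrightarrow> \<exists>i<r. (x + k) \<bullet> v i < - a i"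
      using x unfolding P_prime_def by blast
    have "x \<bullet> v j < 1 - a j" if j: "j < r" for j
    proof (rule ccontr)
      assume c: "\<not> ?thesis"
      obtain k where k: "lattice_pt k" "k \<bullet> v j = -1" "\<forall>i<r. i \<noteq> j \<longrightarrow> k \<bullet> v i \<ge> 0"
        using key[OF assms(1) j] by blast
      have "k \<notin> dual_cone (gen_cone r v)"
      proof
        assume "k \<in> dual_cone (gen_cone r v)"
        then have "k \<bullet> v j \<ge> 0" using gen_cone_gen[OF j] unfolding dual_cone_def by blast
        then show False using k(2) by simp
      qed
      then obtain i where i: "i < r" "(x + k) \<bullet> v i < - a i" using xk k(1) by blast
      show False
      proof (cases "i = j")
        case True then show False using i c k(2) by (simp add: inner_add_left)
      next
        case False
        then have "k \<bullet> v i \<ge> 0" using k(3) i by blast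
        moreover have "x \<bullet> v i \<ge> 0" "a i \<ge> 0" using x0 assms(2) i by auto
        ultimately show False using i by (simp add: inner_add_left)
      qed
    qed
    then show "x \<in> P_sigma_D r v a" unfolding P_sigma_D_def using x0 by blast
  qed
qed


end
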